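(* Let $(G,L_G)$ be a labeled graph presenting a sofic shift $Y=L_G(X_G)$. Then the future cover $(\mathbb K(Y),L_{\mathbb K(Y)})$ of $Y$ is isomorphic, as a labeled graph, to the merged graph $([\underline{G}],L_{[\underline{G}]})$ of $(\underline{G},L_{\underline{G}})$, via the map $F(y)\mapsto f_{\underline{G}}(D^y)$ on vertices.
   Context: A labeled graph $(G,L_G)$: finite directed graph (vertices $V_G$, edges $E_G$, source/terminal maps $s_G,t_G$) without sinks or sources, labeling $L_G:E_G\to A$, edge shift $X_G$, presenting $Y=L_G(X_G)$. For a labeled graph $(H,L_H)$ and vertex $v$, $f_H(v)=\{L_H(x): x$ a right-infinite path starting at $v\}$. Construction of $\underline{G}$: for a non-empty $D\subseteq V_G$ and $a\in A$ let $[D,a]=\{t_G(e): e\in E_G, s_G(e)\in D, L_G(e)=a\}$. For $y\in Y$ let $D^y$ be the set of terminal vertices of left-infinite paths $x=\cdots x_{-2}x_{-1}$ in $G$ with $L_G(x)=y_{(-\infty,-1]}$. The labeled graph $(\underline{G},L_{\underline{G}})$ has vertex set $\{D^y: y\in Y\}$, and for each vertex $D$ and each $a\in A$ with $[D,a]\neq\emptyset$ one edge $(D,a)$ from $D$ to $[D,a]$ labeled $a$. Merged graph of a labeled graph $(H,L_H)$: vertices are the distinct sets $f_H(v)$, $v\in V_H$; there is an edge labeled $a$ from $f_H(v)$ to $f_H(w)$ when there are vertices $v',w'$ with $f_H(v')=f_H(v)$, $f_H(w')=f_H(w)$ and an edge labeled $a$ from $v'$ to $w'$ in $H$ (one edge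 per such pair and label). Future cover: for $y\in Y$ let $F(y)=\{w\in Y[0,\infty): y_{(-\infty,-1]}w\in Y\}$ with $Y[0,\infty)=\{y_{[0,\infty)}:y\in Y\}$; $(\mathbb K(Y),L_{\mathbb K(Y)})$ has vertices the distinct sets $F(y)$ and an edge labeled $a$ from $F(y)$ to $F(z)$ exactly when $F(z)=\{w\in A^{\mathbb N}: aw\in F(y)\}$ (one edge per such pair and label). *)

theory Defs
  imports Main
begin

definition edge_shift :: "'e set \<Rightarrow> ('e \<Rightarrow> 'v) \<Rightarrow> ('e \<Rightarrow> 'v) \<Rightarrow> (int \<Rightarrow> 'e) set" where
  "edge_shift E s t = {x. (\<forall>i. x i \<in> E) \<and> (\<forall>i. t (x i) = s (x (i + 1)))}"

definition presented_shift ::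
  "'e set \<Rightarrow> ('e \<Rightarrow> 'v) \<Rightarrow> ('e \<Rightarrow> 'v) \<Rightarrow> ('e \<Rightarrow> 'a) \<Rightarrow> (int \<Rightarrow> 'a) set" where
  "presented_shift E s t L = {L \<circ> x | x. x \<in> edge_shift E s t}"

definition follower ::
  "'e set \<Rightarrow> ('e \<Rightarrow> 'v) \<Rightarrow> ('e \<Rightarrow> 'v) \<Rightarrow> ('e \<Rightarrow> 'a) \<Rightarrow> 'v set \<Rightarrow> 'a \<Rightarrow> 'v set" where
  "follower E s t L D a = {t e | e. e \<in> E \<and> s e \<in> D \<and> L e = a}"

text \<open>D^y: terminal vertices of left-infinite paths labeled y_(-inf,-1].
 A left-infinite path ... x_(-2) x_(-1) is encoded as x :: nat => 'e with x n = x_(-(n+1)).\<close>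
definition past_set ::
  "'e set \<Rightarrow> ('e \<Rightarrow> 'v) \<Rightarrow> ('e \<Rightarrow> 'v) \<Rightarrow> ('e \<Rightarrow> 'a) \<Rightarrow> (int \<Rightarrow> 'a) \<Rightarrow> 'v set" where
  "past_set E s t L y = {t (x 0) | x. (\<forall>n. x n \<in> E) \<and> (\<forall>n. t (x (Suc n)) = s (x n))
      \<and> (\<forall>n. L (x n) = y (- int n - 1))}"

text \<open>The labeled graph underline G; since it has at most one edge per
 (source, label, target), it is represented by labeled triples.\<close>
definition under_V ::
  "'e set \<Rightarrow> ('e \<Rightarrow> 'v) \<Rightarrow> ('e \<Rightarrow> 'v) \<Rightarrow> ('e \<Rightarrow> 'a) \<Rightarrow> 'v set set" where
  "under_V E s t L = {past_set E s t L y | y. y \<in> presented_shift E s t L}"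

definition under_E ::
  "'e set \<Rightarrow> ('e \<Rightarrow> 'v) \<Rightarrow> ('e \<Rightarrow> 'v) \<Rightarrow> ('e \<Rightarrow> 'a) \<Rightarrow> ('v set \<times> 'a \<times> 'v set) set" where
  "under_E E s t L = {(D, a, follower E s t L D a) | D a.
      D \<in> under_V E s t L \<and> follower E s t L D a \<noteq> {}}"

definition right_labels :: "('w \<times> 'a \<times> 'w) set \<Rightarrow> 'w \<Rightarrow> (nat \<Rightarrow> 'a) set" where
  "right_labels EH v = {w. \<exists>p. p 0 = v \<and> (\<forall>n. (p n, w n, p (Suc n)) \<in> EH)}"

definition merged_V :: "'w set \<Rightarrow> ('w \<times> 'a \<times> 'w) set \<Rightarrow> (nat \<Rightarrow> 'a) set set" where
  "merged_V VH EH = right_labels EH ` VH"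

definition merged_E :: "'w set \<Rightarrow> ('w \<times> 'a \<times> 'w) set \<Rightarrow>
    ((nat \<Rightarrow> 'a) set \<times> 'a \<times> (nat \<Rightarrow> 'a) set) set" where
  "merged_E VH EH = {(right_labels EH v, a, right_labels EH w) | v a w.
      v \<in> VH \<and> w \<in> VH \<and> (v, a, w) \<in> EH}"

definition right_part :: "(int \<Rightarrow> 'a) set \<Rightarrow> (nat \<Rightarrow> 'a) set" where
  "right_part Y = {(\<lambda>n. y (int n)) | y. y \<in> Y}"

definition glue :: "(int \<Rightarrow> 'a) \<Rightarrow> (nat \<Rightarrow> 'a) \<Rightarrow> (int \<Rightarrow> 'a)" where
  "glue y w = (\<lambda>i. if i < 0 then y i else w (nat i))"

definition future :: "(int \<Rightarrow> 'a) set \<Rightarrow> (int \<Rightarrow> 'a) \<Rightarrow> (nat \<Rightarrow> 'a) set" where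
  "future Y y = {w. w \<in> right_part Y \<and> glue y w \<in> Y}"

definition fcover_V :: "(int \<Rightarrow> 'a) set \<Rightarrow> (nat \<Rightarrow> 'a) set set" where
  "fcover_V Y = future Y ` Y"

definition fcover_E :: "(int \<Rightarrow> 'a) set \<Rightarrow> ((nat \<Rightarrow> 'a) set \<times> 'a \<times> (nat \<Rightarrow> 'a) set) set" where
  "fcover_E Y = {(future Y y, a, future Y z) | y a z. y \<in> Y \<and> z \<in> Y \<and>
      future Y z = {w. case_nat a w \<in> future Y y}}"

end

theory Submission
  imports Defs
begin


lemma pigeon:
  assumes "finite S" "\<And>x n. P x (Suc n) \<Longrightarrow> P x n" "\<And>n. \<exists>x\<in>S. P x n"
  shows "\<exists>x\<in>S. \<forall>n. P x n"
proof (rule ccontr)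
  assume "\<not> ?thesis"
  then have "\<forall>x\<in>S. \<exists>n. \<not> P x n" by blast
  then obtain f where f: "\<forall>x\<in>S. \<not> P x (f x)" by metis
  have anti: "P x (n + k) \<Longrightarrow> P x n" for x n k
    by (induction k) (auto intro: assms(2))
  obtain x where x: "x\<in>S" "P x (Max (f`S))" using assms(3) by blast
  moreover have "f x \<le> Max (f ` S)" using x assms(1) by simp
  ultimately have "P x (f x)" using anti by (metis le_Suc_ex)
  with f x show False by blast
qed

locale lg =
  fixes V :: "'v set" and E :: "'e set" and s t :: "'e \<Rightarrow> 'v" and L :: "'e \<Rightarrow> 'a"
  assumes finV: "finite V" and endp: "\<forall>e\<in>E. s e \<in> V \<and> t e \<in> V"
    and nosink: "\<forall>v\<in>V. \<exists>e\<in>E. s e = v"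
begin

abbreviation fol where "fol \<equiv> follower E s t L"
abbreviation PS where "PS \<equiv> past_set E s t L"
abbreviation YY where "YY \<equiv> presented_shift E s t L"
abbreviation UV where "UV \<equiv> under_V E s t L"
abbreviation UE where "UE \<equiv> under_E E s t L"
abbreviation M where "M \<equiv> right_labels UE"

primrec it :: "'v set \<Rightarrow> (nat \<Rightarrow> 'a) \<Rightarrow> nat \<Rightarrow> 'v set" where
  "it D w 0 = D"
| "it D w (Suc n) = fol (it D w n) (w n)"

lemma fol_UN: "fol (\<Union>X) a = (\<Union>D\<in>X. fol D a)" unfolding follower_def by auto
lemma fol_empty: "fol {} a = {}" unfolding follower_def by auto
lemma fol_sub: "fol D a \<subseteq> V" using endp by (auto simp: follower_def)

lemma it_Suc': "it D w (Suc n) = it (fol D (w 0)) (w \<circ> Suc) n"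
  by (induction n) auto

lemma it_UN: "it D w n = (\<Union>v\<in>D. it {v} w n)"
proof (induction n)
  case 0 then show ?case by auto
next
  case (Suc n)
  then show ?case by (simp add: fol_UN)
qed

lemma it_anti: "it D w (Suc n) \<noteq> {} \<Longrightarrow> it D w n \<noteq> {}"
  by (auto simp: follower_def)

definition good where "good v w \<longleftrightarrow> (\<forall>n. it {v} w n \<noteq> {})"

lemma good_step:
  assumes "good v w" shows "\<exists>e\<in>E. s e = v \<and> L e = w 0 \<and> good (t e) (w \<circ> Suc)"
proof -
  let ?S = "fol {v} (w 0)"
  have "\<exists>u\<in>?S. \<forall>n. it {u} (w\<circ>Suc) n \<noteq> {}"
  proof (rule pigeon)
    show "finite ?S" using fol_sub finV finite_subset by blast
    show "it {x} (w\<circ>Suc) (Suc n) \<noteq> {} \<Longrightarrow> it {x} (w\<circ>Suc) n \<noteq> {}" for x n by (rule it_anti)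
    show "\<exists>x\<in>?S. it {x} (w\<circ>Suc) n \<noteq> {}" for n
    proof -
      have "it {v} w (Suc n) \<noteq> {}" using assms good_def by blast
      then have "it ?S (w\<circ>Suc) n \<noteq> {}" using it_Suc'[of "{v}" w n] by simp
      then show ?thesis using it_UN[of ?S] by blast
    qed
  qed
  then show ?thesis by (auto simp: follower_def good_def)
qed

definition R where "R v = {w. \<exists>p. (\<forall>n. p n \<in> E) \<and> s (p 0) = v \<and> (\<forall>n. t (p n) = s (p (Suc n))) \<and> (\<forall>n. L (p n) = w n)}"

lemma good_R: assumes "good v w" shows "w \<in> R v"
proof -
  define ch where "ch v w = (SOME e. e\<in>E \<and> s e = v \<and> L e = w 0 \<and> good (t e) (w \<circ> Suc))" for v w
  have ch: "ch v w \<in> E \<and> s (ch v w) = v \<and> L (ch v w) = w 0 \<and> good (t (ch v w)) (w\<circ>Suc)"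
    if gv: "good v w" for v w
  proof -
    obtain e where "e\<in>E \<and> s e = v \<and> L e = w 0 \<and> good (t e) (w \<circ> Suc)" using good_step[OF gv] by blast
    then show ?thesis unfolding ch_def by (rule someI)
  qed
  define ws where "ws n = (\<lambda>m. w (m + n))" for n
  define vs where "vs = rec_nat v (\<lambda>n u. t (ch u (ws n)))"
  have vs0: "vs 0 = v" and vsS: "vs (Suc n) = t (ch (vs n) (ws n))" for n by (simp_all add: vs_def)
  have ws_Suc: "ws n \<circ> Suc = ws (Suc n)" for n by (auto simp: ws_def)
  have ws0: "ws 0 = w" by (auto simp: ws_def)
  have g: "good (vs n) (ws n)" for n
  proof (induction n)
    case 0 then show ?case using assms by (simp add: vs0 ws0)
  next
    case (Suc n) then show ?case using ch[OF Suc] by (simp add: vsS ws_Suc)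
  qed
  define p where "p n = ch (vs n) (ws n)" for n
  have pp: "p n \<in> E \<and> s (p n) = vs n \<and> L (p n) = w n \<and> t (p n) = vs (Suc n)" for n
    using ch[OF g, of n] by (simp add: p_def vsS ws_def)
  show ?thesis unfolding R_def
    apply (rule CollectI, rule exI[of _ p])
    using pp vs0 by auto
qed

lemma R_it: assumes "w \<in> R v" "v \<in> D" shows "it D w n \<noteq> {}"
proof -
  obtain p where p: "\<forall>n. p n \<in> E" "s (p 0) = v" "\<forall>n. t (p n) = s (p (Suc n))" "\<forall>n. L (p n) = w n"
    using assms(1) unfolding R_def by blast
  have "s (p n) \<in> it D w n"
  proof (induction n)
    case 0 then show ?case using p assms by simp
  next
    case (Suc n)
    have "s (p (Suc n)) = t (p n)" using p by simp
    moreover have "t (p n) \<in> fol (it D w n) (w n)" unfolding follower_def using p Suc by blast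
    ultimately show ?case by simp
  qed
  then show ?thesis by blast
qed

lemma K: assumes "D \<subseteq> V" "\<forall>n. it D w n \<noteq> {}" shows "\<exists>v\<in>D. w \<in> R v"
proof -
  have "\<exists>v\<in>D. \<forall>n. it {v} w n \<noteq> {}"
  proof (rule pigeon)
    show "finite D" using assms finV finite_subset by blast
    show "it {x} w (Suc n) \<noteq> {} \<Longrightarrow> it {x} w n \<noteq> {}" for x n by (rule it_anti)
    show "\<exists>x\<in>D. it {x} w n \<noteq> {}" for n using assms(2) it_UN[of D w n] by blast
  qed
  then show ?thesis using good_R good_def by blast
qed

lemma rpath: assumes "v \<in> V" shows "\<exists>p. (\<forall>n. p n \<in> E) \<and> s (p 0) = v \<and> (\<forall>n. t (p n) = s (p (Suc n)))"
proof -
  define nx where "nx u = (SOME e. e \<in> E \<and> s e = u)" for u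
  have nx: "nx u \<in> E \<and> s (nx u) = u" if "u \<in> V" for u
    unfolding nx_def by (rule someI_ex) (use nosink that in blast)
  define p where "p = rec_nat (nx v) (\<lambda>n e. nx (t e))"
  have p0: "p 0 = nx v" and pS: "p (Suc n) = nx (t (p n))" for n by (simp_all add: p_def)
  have pE: "p n \<in> E" for n
    by (induction n) (use nx assms endp in \<open>auto simp: p0 pS\<close>)
  show ?thesis
    by (rule exI[of _ p]) (use pE nx assms endp in \<open>auto simp: p0 pS\<close>)
qed


lemma glue_iff: "glue y w \<in> YY \<longleftrightarrow> (\<exists>v\<in>PS y. w \<in> R v)"
proof
  assume "glue y w \<in> YY"
  then obtain z where z: "z \<in> edge_shift E s t" "glue y w = L \<circ> z"
    unfolding presented_shift_def by blast
  have zE: "\<And>i. z i \<in> E" and zt: "\<And>i. t (z i) = s (z (i + 1))"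
    using z(1) unfolding edge_shift_def by auto
  have zL: "L (z i) = glue y w i" for i using z(2) by (simp add: fun_eq_iff)
  define x where "x n = z (- int n - 1)" for n
  have xS: "t (x (Suc n)) = s (x n)" for n
  proof -
    have eq: "- int (Suc n) - 1 + 1 = - int n - 1" by simp
    show ?thesis using zt[of "- int (Suc n) - 1"] unfolding x_def eq .
  qed
  have xL: "L (x n) = y (- int n - 1)" for n
    unfolding x_def zL glue_def by simp
  have xE: "\<forall>n. x n \<in> E" using zE x_def by simp
  have v: "t (x 0) \<in> PS y" unfolding past_set_def using xE xS xL by blast
  have "w \<in> R (t (x 0))" unfolding R_def
  proof (rule CollectI, rule exI[of _ "\<lambda>n. z (int n)"], intro conjI allI)
    show "z (int n) \<in> E" for n by (rule zE)
    show "s (z (int 0)) = t (x 0)" using zt[of "-1"] by (simp add: x_def)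
    show "t (z (int n)) = s (z (int (Suc n)))" for n using zt[of "int n"] by (simp add: add.commute)
    show "L (z (int n)) = w n" for n unfolding zL glue_def by simp
  qed
  then show "\<exists>v\<in>PS y. w \<in> R v" using v by blast
next
  assume "\<exists>v\<in>PS y. w \<in> R v"
  then obtain x p where x: "\<forall>n. x n \<in> E" "\<forall>n. t (x (Suc n)) = s (x n)" "\<forall>n. L (x n) = y (- int n - 1)"
    and p: "\<forall>n. p n \<in> E" "s (p 0) = t (x 0)" "\<forall>n. t (p n) = s (p (Suc n))" "\<forall>n. L (p n) = w n"
    unfolding past_set_def R_def by blast
  define z where "z i = (if i < 0 then x (nat (- i - 1)) else p (nat i))" for i
  have "z \<in> edge_shift E s t" unfolding edge_shift_def
  proof (intro CollectI conjI allI)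
    show "z i \<in> E" for i using x p by (simp add: z_def)
    show "t (z i) = s (z (i + 1))" for i
    proof (cases "i < -1")
      case True
      then have "nat (- i - 1) = Suc (nat (- (i+1) - 1))" by simp
      then show ?thesis using True x by (simp add: z_def)
    next
      case False
      show ?thesis
      proof (cases "i = -1")
        case True then show ?thesis using p by (simp add: z_def)
      next
        case False
        with \<open>\<not> i < -1\<close> have "i \<ge> 0" by simp
        then have "nat (i + 1) = Suc (nat i)" by simp
        then show ?thesis using \<open>i \<ge> 0\<close> p by (simp add: z_def)
      qed
    qed
  qed
  moreover have "glue y w = L \<circ> z"
  proof
    fix i
    show "glue y w i = (L \<circ> z) i"
    proof (cases "i < 0")
      case True
      then have "- int (nat (- i - 1)) - 1 = i" by simp
      then show ?thesis using True x by (simp add: z_def glue_def)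
    next
      case False then show ?thesis using p by (simp add: z_def glue_def)
    qed
  qed
  ultimately show "glue y w \<in> YY" unfolding presented_shift_def by blast
qed

lemma future_eq: "future YY y = {w. glue y w \<in> YY}"
proof -
  have "w \<in> right_part YY" if "glue y w \<in> YY" for w
  proof -
    have "w = (\<lambda>n. glue y w (int n))" by (simp add: glue_def)
    then show ?thesis unfolding right_part_def using that by blast
  qed
  then show ?thesis unfolding future_def by blast
qed

lemma PS_sub: "PS y \<subseteq> V" using endp unfolding past_set_def by auto

lemma PS_ne: assumes "y \<in> YY" shows "PS y \<noteq> {}"
proof -
  obtain z where z: "z \<in> edge_shift E s t" "y = L \<circ> z"
    using assms unfolding presented_shift_def by blast
  have zE: "\<And>i. z i \<in> E" and zt: "\<And>i. t (z i) = s (z (i + 1))"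
    using z(1) unfolding edge_shift_def by auto
  define x where "x n = z (- int n - 1)" for n
  have xS: "t (x (Suc n)) = s (x n)" for n
  proof -
    have eq: "- int (Suc n) - 1 + 1 = - int n - 1" by simp
    show ?thesis using zt[of "- int (Suc n) - 1"] unfolding x_def eq .
  qed
  have xE: "\<forall>n. x n \<in> E" using zE x_def by simp
  have xL: "\<forall>n. L (x n) = y (- int n - 1)" using z(2) x_def by simp
  have "t (x 0) \<in> PS y" unfolding past_set_def using xE xS xL by blast
  then show ?thesis by blast
qed

lemma UV_eq: "UV = PS ` YY" unfolding under_V_def by auto

lemma past_cons:
  assumes "y' (-1) = a" "\<forall>n. y' (- int n - 2) = y (- int n - 1)"
  shows "PS y' = fol (PS y) a"
proof
  show "PS y' \<subseteq> fol (PS y) a"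
  proof
    fix u assume "u \<in> PS y'"
    then obtain x' where x': "\<forall>n. x' n \<in> E" "\<forall>n. t (x' (Suc n)) = s (x' n)" "\<forall>n. L (x' n) = y' (- int n - 1)" "u = t (x' 0)"
      unfolding past_set_def by blast
    have xL: "\<forall>n. L (x' (Suc n)) = y (- int n - 1)"
    proof
      fix n
      have "- int (Suc n) - 1 = - int n - 2" by simp
      then have "L (x' (Suc n)) = y' (- int n - 2)" using x'(3) by metis
      then show "L (x' (Suc n)) = y (- int n - 1)" using assms(2) by simp
    qed
    have xE: "\<forall>n. x' (Suc n) \<in> E" using x' by blast
    have xS: "\<forall>n. t (x' (Suc (Suc n))) = s (x' (Suc n))" using x' by blast
    have "t (x' (Suc 0)) \<in> PS y" unfolding past_set_def
      apply (rule CollectI, rule exI[of _ "\<lambda>n. x' (Suc n)"])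
      using xE xS xL by simp
    then have "s (x' 0) \<in> PS y" using x'(2) by metis
    moreover have "L (x' 0) = a" using x'(3) assms(1) by simp
    ultimately show "u \<in> fol (PS y) a" unfolding follower_def using x' by blast
  qed
next
  show "fol (PS y) a \<subseteq> PS y'"
  proof
    fix u assume "u \<in> fol (PS y) a"
    then obtain e x where e: "e \<in> E" "L e = a" "u = t e"
      and x: "\<forall>n. x n \<in> E" "\<forall>n. t (x (Suc n)) = s (x n)" "\<forall>n. L (x n) = y (- int n - 1)" "s e = t (x 0)"
      unfolding follower_def past_set_def by blast
    define x' where "x' = case_nat e x"
    have 1: "\<forall>n. x' n \<in> E"
    proof
      fix n show "x' n \<in> E" using e x by (cases n) (simp_all add: x'_def)
    qed
    have 2: "\<forall>n. t (x' (Suc n)) = s (x' n)"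
    proof
      fix n show "t (x' (Suc n)) = s (x' n)" using e x by (cases n) (simp_all add: x'_def)
    qed
    have 3: "\<forall>n. L (x' n) = y' (- int n - 1)"
    proof
      fix n show "L (x' n) = y' (- int n - 1)"
      proof (cases n)
        case 0 then show ?thesis using e assms by (simp add: x'_def)
      next
        case (Suc m)
        have "- int n - 1 = - int m - 2" using Suc by simp
        then have "y' (- int n - 1) = y (- int m - 1)" using assms(2) by metis
        then show ?thesis using Suc x by (simp add: x'_def)
      qed
    qed
    have "t (x' 0) \<in> PS y'" unfolding past_set_def
      apply (rule CollectI, rule exI[of _ x'])
      using 1 2 3 by simp
    then show "u \<in> PS y'" using e by (simp add: x'_def)
  qed
qed

lemma PS_glue: "PS (glue y w) = PS y"
  unfolding past_set_def glue_def by simp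

lemma U: assumes "D \<in> UV" "fol D a \<noteq> {}" shows "fol D a \<in> UV"
proof -
  obtain y where y: "y \<in> YY" "D = PS y" using assms(1) UV_eq by auto
  obtain e where e: "e \<in> E" "s e \<in> D" "L e = a" using assms(2) unfolding follower_def by blast
  obtain q where q: "\<forall>n. q n \<in> E" "s (q 0) = t e" "\<forall>n. t (q n) = s (q (Suc n))"
    using rpath[of "t e"] endp e by blast
  define y' where "y' i = (if i = -1 then a else y (i + 1))" for i
  have "\<forall>n. y' (- int n - 2) = y (- int n - 1)"
  proof
    fix n
    have "- int n - 2 \<noteq> -1" "- int n - 2 + 1 = - int n - 1" by simp_all
    then show "y' (- int n - 2) = y (- int n - 1)" unfolding y'_def by metis
  qed
  moreover have "y' (-1) = a" unfolding y'_def by simp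
  ultimately have py: "PS y' = fol D a" using past_cons[of y' a y] y(2) by blast
  have "t e \<in> fol D a" using e unfolding follower_def by blast
  moreover have "L \<circ> q \<in> R (t e)" unfolding R_def
    apply (rule CollectI, rule exI[of _ q]) using q by simp
  ultimately have g: "glue y' (L \<circ> q) \<in> YY" using glue_iff[of y' "L \<circ> q"] py by blast
  have "fol D a = PS (glue y' (L \<circ> q))" using PS_glue py by simp
  then show ?thesis using g UV_eq by simp
qed

lemma UV_ne: "D \<in> UV \<Longrightarrow> D \<noteq> {}" using UV_eq PS_ne by auto

lemma M_char: assumes "D \<in> UV" shows "M D = {w. \<forall>n. it D w n \<noteq> {}}"
proof
  show "M D \<subseteq> {w. \<forall>n. it D w n \<noteq> {}}"
  proof
    fix w assume "w \<in> M D"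
    then obtain P where P: "P 0 = D" "\<forall>n. (P n, w n, P (Suc n)) \<in> UE"
      unfolding right_labels_def by blast
    have PE: "P n \<in> UV \<and> P (Suc n) = fol (P n) (w n)" for n
    proof -
      have "(P n, w n, P (Suc n)) \<in> UE" using P(2) by blast
      then show ?thesis unfolding under_E_def by blast
    qed
    have eq: "P n = it D w n" for n
    proof (induction n)
      case 0 then show ?case using P(1) by simp
    next
      case (Suc n) then show ?case using PE[of n] by simp
    qed
    have "it D w n \<noteq> {}" for n using PE[of n] UV_ne eq[of n] by metis
    then show "w \<in> {w. \<forall>n. it D w n \<noteq> {}}" by blast
  qed
next
  show "{w. \<forall>n. it D w n \<noteq> {}} \<subseteq> M D"
  proof
    fix w assume w: "w \<in> {w. \<forall>n. it D w n \<noteq> {}}"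
    then have w': "it D w n \<noteq> {}" for n by blast
    have inU: "it D w n \<in> UV" for n
    proof (induction n)
      case 0 then show ?case using assms by simp
    next
      case (Suc n)
      have "fol (it D w n) (w n) \<noteq> {}" using w'[of "Suc n"] by simp
      then show ?case using U[OF Suc] by simp
    qed
    have "(it D w n, w n, it D w (Suc n)) \<in> UE" for n
    proof -
      have "fol (it D w n) (w n) \<noteq> {}" using w'[of "Suc n"] by simp
      then show ?thesis unfolding under_E_def using inU[of n] by simp
    qed
    then show "w \<in> M D" unfolding right_labels_def
      by (intro CollectI exI[of _ "it D w"]) simp
  qed
qed

lemma future_M: assumes "y \<in> YY" shows "future YY y = M (PS y)"
proof -
  have "future YY y = {w. \<exists>v\<in>PS y. w \<in> R v}" using future_eq glue_iff by blast
  also have "\<dots> = {w. \<forall>n. it (PS y) w n \<noteq> {}}"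
  proof (intro Collect_cong iffI)
    fix w assume "\<exists>v\<in>PS y. w \<in> R v"
    then show "\<forall>n. it (PS y) w n \<noteq> {}" using R_it by blast
  next
    fix w assume "\<forall>n. it (PS y) w n \<noteq> {}"
    then show "\<exists>v\<in>PS y. w \<in> R v" using K[OF PS_sub] by blast
  qed
  also have "\<dots> = M (PS y)"
  proof -
    have "PS y \<in> UV" using UV_eq assms by blast
    then show ?thesis using M_char by simp
  qed
  finally show ?thesis .
qed

lemma M_fol: assumes "D \<in> UV" "fol D a \<noteq> {}" shows "M (fol D a) = {w. case_nat a w \<in> M D}"
proof -
  have "M (fol D a) = {w. \<forall>n. it (fol D a) w n \<noteq> {}}" using M_char U assms by blast
  also have "\<dots> = {w. \<forall>n. it D (case_nat a w) (Suc n) \<noteq> {}}"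
  proof -
    have "it (fol D a) w n = it D (case_nat a w) (Suc n)" for w n
    proof -
      have "case_nat a w \<circ> Suc = w" by (simp add: fun_eq_iff)
      then show ?thesis using it_Suc'[of D "case_nat a w" n] by simp
    qed
    then show ?thesis by simp
  qed
  also have "\<dots> = {w. \<forall>n. it D (case_nat a w) n \<noteq> {}}"
  proof (intro Collect_cong iffI allI)
    fix w n assume h: "\<forall>n. it D (case_nat a w) (Suc n) \<noteq> {}"
    show "it D (case_nat a w) n \<noteq> {}"
    proof (cases n)
      case 0 then show ?thesis using UV_ne[OF assms(1)] by simp
    next
      case (Suc m) then show ?thesis using h by blast
    qed
  next
    fix w n assume "\<forall>n. it D (case_nat a w) n \<noteq> {}"
    then show "it D (case_nat a w) (Suc n) \<noteq> {}" by blast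
  qed
  also have "\<dots> = {w. case_nat a w \<in> M D}" using M_char[OF assms(1)] by simp
  finally show ?thesis .
qed

lemma fv_eq: "fcover_V YY = merged_V UV UE"
proof -
  have "merged_V UV UE = M ` PS ` YY" unfolding merged_V_def UV_eq ..
  also have "\<dots> = (\<lambda>y. M (PS y)) ` YY" by (simp add: image_image)
  also have "\<dots> = future YY ` YY" using future_M by (intro image_cong) auto
  finally show ?thesis unfolding fcover_V_def by simp
qed

lemma future_ne: assumes "z \<in> YY" shows "(\<lambda>n. z (int n)) \<in> future YY z"
proof -
  have "glue z (\<lambda>n. z (int n)) = z" by (auto simp: glue_def fun_eq_iff)
  then show ?thesis using future_eq assms by simp
qed

lemma edges:
  assumes P: "P \<in> fcover_V YY" and Q: "Q \<in> fcover_V YY"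
  shows "(P, a, Q) \<in> fcover_E YY \<longleftrightarrow> (P, a, Q) \<in> merged_E UV UE"
proof
  assume "(P, a, Q) \<in> fcover_E YY"
  then obtain y z where yz: "y \<in> YY" "z \<in> YY" "P = future YY y" "Q = future YY z"
    "Q = {w. case_nat a w \<in> P}"
    unfolding fcover_E_def by blast
  have PM: "P = M (PS y)" using yz future_M by simp
  obtain w0 where "w0 \<in> Q" using future_ne yz by blast
  then have "case_nat a w0 \<in> M (PS y)" using yz PM by blast
  moreover have PU: "PS y \<in> UV" using UV_eq yz by blast
  ultimately have "it (PS y) (case_nat a w0) (Suc 0) \<noteq> {}" using M_char by blast
  then have ne: "fol (PS y) a \<noteq> {}" by simp
  have FU: "fol (PS y) a \<in> UV" using U[OF PU ne] .
  have QM: "Q = M (fol (PS y) a)" using M_fol[OF PU ne] yz(5) PM by simp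
  have "(PS y, a, fol (PS y) a) \<in> UE" unfolding under_E_def using PU ne by blast
  then show "(P, a, Q) \<in> merged_E UV UE" unfolding merged_E_def using PU FU PM QM by blast
next
  assume "(P, a, Q) \<in> merged_E UV UE"
  then obtain D D' where DD: "D \<in> UV" "D' \<in> UV" "(D, a, D') \<in> UE" "P = M D" "Q = M D'"
    unfolding merged_E_def by blast
  have "D' = fol D a" "fol D a \<noteq> {}" using DD(3) unfolding under_E_def by blast+
  then have "Q = {w. case_nat a w \<in> P}" using M_fol DD by simp
  moreover obtain y where "y \<in> YY" "P = future YY y" using P unfolding fcover_V_def by blast
  moreover obtain z where "z \<in> YY" "Q = future YY z" using Q unfolding fcover_V_def by blast
  ultimately show "(P, a, Q) \<in> fcover_E YY" unfolding fcover_E_def by blast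
qed

end

theorem corollary5p5:
  fixes V :: "'v set" and E :: "'e set" and s t :: "'e \<Rightarrow> 'v" and L :: "'e \<Rightarrow> 'a"
  assumes "finite V" and "finite E"
    and "\<forall>e\<in>E. s e \<in> V \<and> t e \<in> V"
    and "\<forall>v\<in>V. \<exists>e\<in>E. s e = v"
    and "\<forall>v\<in>V. \<exists>e\<in>E. t e = v"
  defines "Y \<equiv> presented_shift E s t L"
  shows "\<exists>\<phi>. (\<forall>y\<in>Y. \<phi> (future Y y) = right_labels (under_E E s t L) (past_set E s t L y))
     \<and> bij_betw \<phi> (fcover_V Y) (merged_V (under_V E s t L) (under_E E s t L))
     \<and> (\<forall>P\<in>fcover_V Y. \<forall>Q\<in>fcover_V Y. \<forall>a.
          (P, a, Q) \<in> fcover_E Y \<longleftrightarrow>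
          (\<phi> P, a, \<phi> Q) \<in> merged_E (under_V E s t L) (under_E E s t L))"
  proof -
  interpret lg V E s t L using assms(1,3,4) by unfold_locales auto
  show ?thesis unfolding Y_def
  proof (rule exI[of _ id], intro conjI ballI allI)
    show "id (future YY y) = M (PS y)" if "y \<in> YY" for y using future_M that by simp
    show "bij_betw id (fcover_V YY) (merged_V UV UE)" using fv_eq by (simp add: bij_betw_id)
    show "(P, a, Q) \<in> fcover_E YY \<longleftrightarrow> (id P, a, id Q) \<in> merged_E UV UE"
      if "P \<in> fcover_V YY" "Q \<in> fcover_V YY" for P Q a using edges that by simp
  qed
qed

end
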